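(* Let $q\in\mathbb{C}$ with $0<|q|<1$ and $n\in\mathbb{N}$. Then \[ \frac{1}{(q)_\infty}\sum_{k=0}^\infty\frac{q^{k^2}}{(q)_k (q)_{n-k}} =\frac{1}{(q)_n} \sum_{k=0}^{\infty}\frac{q^{k^2}}{(q)_k (q)_{n+k}}, \qquad \frac{1}{(q)_\infty}\sum_{k=0}^\infty\frac{q^{k^2+k}}{(q)_k (q)_{n-k}} =\frac{1}{(q)_n}\sum_{k=0}^{\infty}\frac{q^{k^2+k}}{(q)_k (q)_{n+k+1}}. \]
   Context: $(q)_n=(1-q)(1-q^2)\cdots(1-q^n)$ for $n\ge0$ (with $(q)_0=1$), $1/(q)_n=0$ for $n<0$, and $(q)_\infty=\prod_{i\ge1}(1-q^i)$. *)

theory Defs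
  imports "HOL-Analysis.Analysis"
begin

definition qpoch :: "complex \<Rightarrow> nat \<Rightarrow> complex" where
  "qpoch q n = (\<Prod>i=1..n. 1 - q ^ i)"

definition inv_qpoch :: "complex \<Rightarrow> int \<Rightarrow> complex" where
  "inv_qpoch q n = (if n < 0 then 0 else 1 / qpoch q (nat n))"

definition qpoch_inf :: "complex \<Rightarrow> complex" where
  "qpoch_inf q = (\<Prod>i. 1 - q ^ (i + 1))"

end

theory Submission
  imports Defs
begin


fun tri :: "nat \<Rightarrow> nat" where
  "tri 0 = 0" | "tri (Suc i) = tri i + i"

definition qb :: "complex \<Rightarrow> nat \<Rightarrow> nat \<Rightarrow> complex" where
  "qb q m j = (if j \<le> m then qpoch q m / (qpoch q j * qpoch q (m - j)) else 0)"

lemma qpoch_0[simp]: "qpoch q 0 = 1"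
  by (simp add: qpoch_def)

lemma qpoch_Suc: "qpoch q (Suc n) = qpoch q n * (1 - q ^ Suc n)"
  by (simp add: qpoch_def prod.nat_ivl_Suc')

lemma qpoch_add: "qpoch q (x + d) = qpoch q x * (\<Prod>i<d. 1 - q ^ (x + 1 + i))"
  by (induction d) (simp_all add: qpoch_Suc algebra_simps)

lemma qb_0[simp]: assumes "qpoch q m \<noteq> 0" shows "qb q m 0 = 1"
  using assms by (simp add: qb_def)

lemma qb_diag[simp]: assumes "qpoch q m \<noteq> 0" shows "qb q m m = 1"
  using assms by (simp add: qb_def)

lemma pascal_aux:
  fixes A X D u v :: complex
  assumes "X \<noteq> 0" "D \<noteq> 0" "1 - u \<noteq> 0" "1 - v \<noteq> 0"
  shows "A * (1 - u * v) / (X * (1 - u) * (D * (1 - v))) = A / (X * (D * (1 - v))) + u * (A / (X * (1 - u) * D))"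
proof -
  have "X * (1 - u) * (D * (1 - v)) \<noteq> 0" using assms by simp
  then show ?thesis using assms by (simp add: divide_simps) (simp add: algebra_simps)
qed

lemma qb_pascal:
  assumes nz: "\<And>j. qpoch q j \<noteq> 0"
  shows "qb q (Suc m) (Suc j) = qb q m j + q ^ Suc j * qb q m (Suc j)"
proof (cases "Suc j \<le> m")
  case True
  then obtain d where d: "m = Suc j + d" using le_Suc_ex by blast
  have e1: "Suc m - Suc j = Suc d" "m - j = Suc d" "m - Suc j = d" using d by auto
  have "qb q (Suc m) (Suc j) = qpoch q m * (1 - q ^ Suc m) / (qpoch q j * (1 - q ^ Suc j) * (qpoch q d * (1 - q ^ Suc d)))"
    using True by (simp add: qb_def e1 qpoch_Suc)
  moreover have "qb q m j = qpoch q m / (qpoch q j * (qpoch q d * (1 - q ^ Suc d)))"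
    using True by (simp add: qb_def e1 qpoch_Suc)
  moreover have "qb q m (Suc j) = qpoch q m / (qpoch q j * (1 - q ^ Suc j) * qpoch q d)"
    using True by (simp add: qb_def e1 qpoch_Suc)
  moreover have "q ^ Suc j * q ^ Suc d = q ^ Suc m" using d by (simp add: power_add[symmetric])
  moreover have "1 - q ^ Suc j \<noteq> 0" "1 - q ^ Suc d \<noteq> 0"
    using nz[of "Suc j"] nz[of "Suc d"] by (auto simp: qpoch_Suc)
  ultimately show ?thesis using nz[of j] nz[of d] pascal_aux[of "qpoch q j" "qpoch q d" "q ^ Suc j" "q ^ Suc d" "qpoch q m"]
    by metis
next
  case False
  then show ?thesis
  proof (cases "j = m")
    case True
    then show ?thesis using nz by (simp add: qb_def)
  next
    case False
    with \<open>\<not> Suc j \<le> m\<close> show ?thesis by (simp add: qb_def)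
  qed
qed

lemma rothe:
  assumes nz: "\<And>j. qpoch q j \<noteq> 0"
  shows "(\<Prod>i<m. 1 - z * q ^ i) = (\<Sum>j\<le>m. qb q m j * (-1) ^ j * q ^ tri j * z ^ j)"
proof (induction m arbitrary: z)
  case 0
  then show ?case using nz by simp
next
  case (Suc m)
  define t where "t j = qb q m j * (-1) ^ j * q ^ tri j * q ^ j * z ^ j" for j
  define g where "g j = qb q (Suc m) j * (-1) ^ j * q ^ tri j * z ^ j" for j
  have "(\<Prod>i<Suc m. 1 - z * q ^ i) = (1 - z) * (\<Prod>i<m. 1 - (z * q) * q ^ i)"
    by (subst prod.lessThan_Suc_shift) (simp add: mult.assoc)
  also have "\<dots> = (1 - z) * (\<Sum>j\<le>m. t j)"
    unfolding Suc t_def by (simp add: power_mult_distrib mult.commute mult.left_commute)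
  also have "\<dots> = (\<Sum>j\<le>m. t j) - z * (\<Sum>j\<le>m. t j)"
    by (simp add: algebra_simps)
  finally have L: "(\<Prod>i<Suc m. 1 - z * q ^ i) = (\<Sum>j\<le>m. t j) - z * (\<Sum>j\<le>m. t j)" .
  have gS: "g (Suc j) = t (Suc j) - z * t j" for j
    unfolding g_def t_def using nz by (simp add: qb_pascal[OF nz] power_add algebra_simps)
  have g0: "g 0 = t 0" using nz by (simp add: g_def t_def)
  have tS: "t (Suc m) = 0" by (simp add: t_def qb_def)
  have "(\<Sum>j\<le>Suc m. g j) = g 0 + (\<Sum>j\<le>m. g (Suc j))"
    by (rule sum.atMost_Suc_shift)
  also have "\<dots> = t 0 + (\<Sum>j\<le>m. t (Suc j)) - z * (\<Sum>j\<le>m. t j)"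
    by (simp add: gS g0 sum_subtractf sum_distrib_left)
  also have "t 0 + (\<Sum>j\<le>m. t (Suc j)) = (\<Sum>j\<le>Suc m. t j)"
    by (rule sum.atMost_Suc_shift[symmetric])
  also have "\<dots> = (\<Sum>j\<le>m. t j)" using tS by simp
  finally show ?case using L by (simp add: g_def)
qed

lemma qb_mult:
  assumes nz: "\<And>j. qpoch q j \<noteq> 0" and "k + j \<le> L"
  shows "qb q L k * qb q (L - k) j = qb q L (k + j) * qb q (k + j) j"
proof -
  have e: "L - k - j = L - (k + j)" "k + j - j = k" by auto
  show ?thesis using assms(2) nz[of L] nz[of k] nz[of j] nz[of "L - k"] nz[of "L - (k+j)"] nz[of "k+j"]
    by (simp add: qb_def e field_simps)
qed

lemma pow_aux:
  fixes q :: complex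
  assumes "q \<noteq> 0"
  shows "q ^ (k^2 + a*k) * (q ^ (n + a + k + 1)) ^ j = q ^ ((k+j)^2 + a*(k+j)) * (q ^ (n+1) / q ^ (k+j)) ^ j"
proof -
  have "k^2 + a*k + (n + a + k + 1) * j + (k+j) * j = (k+j)^2 + a*(k+j) + (n+1) * j"
    by (simp add: power2_eq_square algebra_simps)
  then have "q ^ (k^2 + a*k) * (q ^ (n + a + k + 1)) ^ j * (q ^ (k+j)) ^ j = q ^ ((k+j)^2 + a*(k+j)) * (q ^ (n+1)) ^ j"
    by (metis power_add power_mult)
  then show ?thesis using assms by (simp add: power_divide field_simps)
qed

lemma prod_eval:
  fixes q :: complex
  assumes "q \<noteq> 0" and nz: "\<And>j. qpoch q j \<noteq> 0"
  shows "(\<Prod>i<m. 1 - (q ^ (n+1) / q ^ m) * q ^ i) = (if m \<le> n then qpoch q n / qpoch q (n - m) else 0)"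
    (is "?P = _")
proof (cases "m \<le> n")
  case True
  have "?P = (\<Prod>i<m. 1 - q ^ (n - m + 1 + i))"
  proof (rule prod.cong)
    fix i assume "i \<in> {..<m}"
    have "q ^ (n - m + 1 + i) * q ^ m = q ^ (n+1) * q ^ i"
      using True by (simp flip: power_add)
    then show "1 - (q ^ (n+1) / q ^ m) * q ^ i = 1 - q ^ (n - m + 1 + i)"
      using assms by (simp add: field_simps)
  qed simp
  moreover have "qpoch q n = qpoch q (n - m) * (\<Prod>i<m. 1 - q ^ (n - m + 1 + i))"
    using qpoch_add[of q "n - m" m] True by simp
  ultimately show ?thesis using True nz[of "n-m"] by (simp add: field_simps)
next
  case False
  have "(q ^ (n+1) / q ^ m) * q ^ (m - n - 1) = 1"
  proof -
    have "n + 1 + (m - n - 1) = m" using False by simp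
    then have "q ^ (n+1) * q ^ (m - n - 1) = q ^ m" by (metis power_add)
    then show ?thesis using assms by (simp add: field_simps)
  qed
  then have "?P = 0" using False by (intro prod_zero) (auto intro!: bexI[of _ "m - n - 1"])
  then show ?thesis using False by simp
qed

lemma finite_id:
  fixes q :: complex
  assumes q0: "q \<noteq> 0" and nz: "\<And>j. qpoch q j \<noteq> 0"
  shows "qpoch q (n+a+L) * (\<Sum>k\<le>L. q ^ (k^2 + a*k) * qb q L k / qpoch q (n+a+k))
       = (\<Sum>m\<le>L. qb q L m * q ^ (m^2 + a*m) * (if m \<le> n then qpoch q n / qpoch q (n - m) else 0))"
proof -
  define f where "f k j = q ^ (k^2 + a*k) * qb q L k * (qb q (L-k) j * (-1) ^ j * q ^ tri j * (q ^ (n+a+k+1)) ^ j)" for k j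
  have step1: "qpoch q (n+a+L) / qpoch q (n+a+k) = (\<Prod>i<L-k. 1 - q ^ (n+a+k+1) * q ^ i)" if "k \<le> L" for k
  proof -
    have "qpoch q (n+a+L) = qpoch q (n+a+k) * (\<Prod>i<L-k. 1 - q ^ (n+a+k+1+i))"
      using qpoch_add[of q "n+a+k" "L-k"] that by (simp add: add.assoc)
    then show ?thesis using nz[of "n+a+k"] by (simp add: power_add mult.assoc)
  qed
  have "qpoch q (n+a+L) * (\<Sum>k\<le>L. q ^ (k^2 + a*k) * qb q L k / qpoch q (n+a+k))
      = (\<Sum>k\<le>L. q ^ (k^2 + a*k) * qb q L k * (qpoch q (n+a+L) / qpoch q (n+a+k)))"
    by (simp add: sum_distrib_left algebra_simps)
  also have "\<dots> = (\<Sum>k\<le>L. \<Sum>j\<le>L-k. f k j)"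
    by (rule sum.cong) (simp_all add: step1 rothe[OF nz] f_def sum_distrib_left)
  also have "\<dots> = (\<Sum>(k,j)\<in>{(k,j). k+j \<le> L}. f k j)"
  proof -
    have "{(k,j). k+j \<le> L} = Sigma {..L} (\<lambda>k. {..L-k})" by auto
    then show ?thesis by (simp add: sum.Sigma)
  qed
  also have "\<dots> = (\<Sum>m\<le>L. \<Sum>k\<le>m. f k (m - k))"
    by (rule sum.triangle_reindex_eq)
  also have "\<dots> = (\<Sum>m\<le>L. qb q L m * q ^ (m^2 + a*m) * (\<Prod>i<m. 1 - (q ^ (n+1) / q ^ m) * q ^ i))"
  proof (rule sum.cong)
    fix m assume m: "m \<in> {..L}"
    have "(\<Sum>k\<le>m. f k (m - k)) = (\<Sum>j\<le>m. f (m - j) j)"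
      by (rule sum.reindex_bij_witness[of _ "\<lambda>j. m - j" "\<lambda>j. m - j"]) auto
    also have "\<dots> = (\<Sum>j\<le>m. qb q L m * q ^ (m^2 + a*m) * (qb q m j * (-1) ^ j * q ^ tri j * (q ^ (n+1) / q ^ m) ^ j))"
    proof (rule sum.cong)
      fix j assume j: "j \<in> {..m}"
      define k where "k = m - j"
      have mk: "m = k + j" using j by (simp add: k_def)
      have "f (m - j) j = f k j" by (simp add: k_def)
      also have "\<dots> = (qb q L k * qb q (L - k) j) * (q ^ (k^2 + a*k) * (q ^ (n + a + k + 1)) ^ j) * ((-1) ^ j * q ^ tri j)"
        by (simp add: f_def algebra_simps)
      also have "\<dots> = (qb q L m * qb q m j) * (q ^ (m^2 + a*m) * (q ^ (n+1) / q ^ m) ^ j) * ((-1) ^ j * q ^ tri j)"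
        using qb_mult[OF nz, of k j L] pow_aux[OF q0, of k a n j] m by (simp add: mk)
      finally show "f (m - j) j = qb q L m * q ^ (m^2 + a*m) * (qb q m j * (-1) ^ j * q ^ tri j * (q ^ (n+1) / q ^ m) ^ j)"
        by (simp add: algebra_simps)
    qed simp
    also have "\<dots> = qb q L m * q ^ (m^2 + a*m) * (\<Prod>i<m. 1 - (q ^ (n+1) / q ^ m) * q ^ i)"
      by (simp only: rothe[OF nz, where m=m and z="q ^ (n+1) / q ^ m"] sum_distrib_left)
    finally show "(\<Sum>k\<le>m. f k (m - k)) = qb q L m * q ^ (m^2 + a*m) * (\<Prod>i<m. 1 - (q ^ (n+1) / q ^ m) * q ^ i)" .
  qed simp
  also have "\<dots> = (\<Sum>m\<le>L. qb q L m * q ^ (m^2 + a*m) * (if m \<le> n then qpoch q n / qpoch q (n - m) else 0))"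
    by (simp only: prod_eval[OF q0 nz])
  finally show ?thesis .
qed



context
  fixes q :: complex
  assumes q0: "0 < norm q" and q1: "norm q < 1"
begin

lemma qpow_ne1: "i \<ge> 1 \<Longrightarrow> q ^ i \<noteq> 1"
proof
  assume "i \<ge> 1" "q ^ i = 1"
  have "norm q ^ i \<le> norm q ^ 1"
    using \<open>i \<ge> 1\<close> q1 by (intro power_decreasing) auto
  then have "norm (q ^ i) < 1" using q1 by (simp add: norm_power)
  then show False using \<open>q ^ i = 1\<close> by simp
qed

lemma qpoch_nz: "qpoch q j \<noteq> 0"
  unfolding qpoch_def using qpow_ne1 by (auto simp: prod_zero_iff)

lemma conv_prod: "convergent_prod (\<lambda>i. 1 - q ^ (i + 1))"
proof -
  have "summable (\<lambda>k. norm (- (q ^ (k + 1))))"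
    using q1 q0 by (simp add: norm_mult norm_power)
  moreover have "\<And>k. - (q ^ (k + 1)) \<noteq> -1" using qpow_ne1 by (metis le_add2 minus_equation_iff)
  ultimately have "convergent_prod (\<lambda>k. 1 + - (q ^ (k + 1)))"
    by (rule summable_imp_convergent_prod_complex)
  then show ?thesis by simp
qed

lemma qpoch_inf_nz: "qpoch_inf q \<noteq> 0"
proof -
  have "1 - q ^ (i + 1) \<noteq> 0" for i using qpow_ne1[of "i+1"] by simp
  then show ?thesis unfolding qpoch_inf_def using conv_prod by (intro prodinf_nonzero) auto
qed

lemma qpoch_lim: "(\<lambda>L. qpoch q L) \<longlonglongrightarrow> qpoch_inf q"
proof -
  have "(\<lambda>L. \<Prod>i\<le>L. 1 - q ^ (i + 1)) \<longlonglongrightarrow> qpoch_inf q"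
    unfolding qpoch_inf_def by (rule convergent_prod_LIMSEQ[OF conv_prod])
  moreover have "qpoch q (L + 1) = (\<Prod>i\<le>L. 1 - q ^ (i + 1))" for L
    unfolding qpoch_def
    by (simp add: atMost_atLeast0 prod.shift_bounds_cl_Suc_ivl del: prod.cl_ivl_Suc)
  ultimately have "(\<lambda>L. qpoch q (L + 1)) \<longlonglongrightarrow> qpoch_inf q" by simp
  then show ?thesis by (rule LIMSEQ_offset)
qed

lemma qpoch_lim_shift: "(\<lambda>L. qpoch q (c + L)) \<longlonglongrightarrow> qpoch_inf q"
  using LIMSEQ_ignore_initial_segment[OF qpoch_lim, of c] by (simp add: add.commute)

lemma qpoch_upper: obtains K where "K > 0" "\<And>j. norm (qpoch q j) \<le> K"
proof -
  have "Bseq (\<lambda>L. qpoch q L)"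
    using qpoch_lim by (intro convergent_imp_Bseq) (auto simp: convergent_def)
  then show ?thesis using that by (auto elim: BseqE)
qed

lemma qpoch_lower: obtains c where "c > 0" "\<And>j. c \<le> norm (qpoch q j)"
proof -
  define r where "r = norm q"
  have r0: "0 < r" and r1: "r < 1" using q0 q1 by (auto simp: r_def)
  have rpow: "r ^ i < 1" if "i \<ge> 1" for i
  proof -
    have "r ^ i \<le> r ^ 1" using that r0 r1 by (intro power_decreasing) auto
    then show ?thesis using r1 by simp
  qed
  have cp: "convergent_prod (\<lambda>k. 1 + - (r ^ (k + 1)))"
  proof (rule summable_imp_convergent_prod_real)
    show "summable (\<lambda>k. \<bar>- (r ^ (k + 1))\<bar>)"
      using r0 r1 by simp
    show "- (r ^ (k + 1)) \<noteq> -1" for k using rpow[of "k+1"] by simp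
  qed
  define Pr where "Pr = prodinf (\<lambda>k. 1 + - (r ^ (k + 1)))"
  have "0 < 1 + - (r ^ (i + 1))" for i using rpow[of "i+1"] by simp
  then have Pr0: "Pr > 0" unfolding Pr_def
    using cp by (intro less_0_prodinf) auto
  define p where "p j = (\<Prod>i=1..j. 1 - r ^ i)" for j
  have "(\<lambda>L. \<Prod>i\<le>L. 1 + - (r ^ (i + 1))) \<longlonglongrightarrow> Pr"
    unfolding Pr_def by (rule convergent_prod_LIMSEQ[OF cp])
  moreover have "p (L + 1) = (\<Prod>i\<le>L. 1 + - (r ^ (i + 1)))" for L
    unfolding p_def
    by (simp add: atMost_atLeast0 prod.shift_bounds_cl_Suc_ivl del: prod.cl_ivl_Suc)
  ultimately have "(\<lambda>L. p (L + 1)) \<longlonglongrightarrow> Pr" by simp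
  then have plim: "p \<longlonglongrightarrow> Pr" by (rule LIMSEQ_offset)
  have p0: "0 \<le> p j" for j
    unfolding p_def using rpow by (intro prod_nonneg) (auto simp: less_imp_le)
  have "decseq p"
  proof (rule decseq_SucI)
    fix j
    have "p (Suc j) = p j * (1 - r ^ Suc j)" by (simp add: p_def prod.nat_ivl_Suc')
    also have "\<dots> \<le> p j * 1" using p0[of j] r0
      by (intro mult_left_mono) auto
    finally show "p (Suc j) \<le> p j" by simp
  qed
  then have Pp: "Pr \<le> p j" for j using plim by (rule decseq_ge)
  have "p j \<le> norm (qpoch q j)" for j
  proof -
    have "p j \<le> (\<Prod>i=1..j. norm (1 - q ^ i))"
      unfolding p_def
    proof (rule prod_mono)
      fix i assume "i \<in> {1..j}"
      then have "0 \<le> 1 - r ^ i" using rpow[of i] by auto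
      moreover have "1 - r ^ i \<le> norm (1 - q ^ i)"
        using norm_triangle_ineq2[of 1 "q ^ i"] by (simp add: r_def norm_power)
      ultimately show "0 \<le> 1 - r ^ i \<and> 1 - r ^ i \<le> norm (1 - q ^ i)" by simp
    qed
    then show ?thesis unfolding qpoch_def by (simp add: prod_norm)
  qed
  then show ?thesis using that[of Pr] Pr0 Pp by (meson order_trans)
qed

lemma qb_lim: "(\<lambda>L. qb q L m) \<longlonglongrightarrow> 1 / qpoch q m"
proof -
  have "(\<lambda>L. qb q (L + m) m) = (\<lambda>L. qpoch q (m + L) / (qpoch q m * qpoch q L))"
    by (auto simp: qb_def add.commute)
  moreover have "(\<lambda>L. qpoch q (m + L) / (qpoch q m * qpoch q L)) \<longlonglongrightarrow> qpoch_inf q / (qpoch q m * qpoch_inf q)"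
    by (intro tendsto_intros qpoch_lim_shift qpoch_lim) (simp add: qpoch_nz qpoch_inf_nz)
  moreover have "qpoch_inf q / (qpoch q m * qpoch_inf q) = 1 / qpoch q m"
    using qpoch_inf_nz by simp
  ultimately have "(\<lambda>L. qb q (L + m) m) \<longlonglongrightarrow> 1 / qpoch q m" by simp
  then show ?thesis by (rule LIMSEQ_offset)
qed

lemma main_lim:
  "qpoch_inf q * (\<Sum>k. q ^ (k^2 + a*k) / (qpoch q k * qpoch q (n+a+k)))
   = (\<Sum>m\<le>n. q ^ (m^2 + a*m) * qpoch q n / (qpoch q m * qpoch q (n - m)))"
proof -
  obtain K where K: "K > 0" "\<And>j. norm (qpoch q j) \<le> K" using qpoch_upper by blast
  obtain c where c: "c > 0" "\<And>j. c \<le> norm (qpoch q j)" using qpoch_lower by blast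
  define r where "r = norm q"
  define A where "A k L = q ^ (k^2 + a*k) * qb q L k / qpoch q (n+a+k)" for k L
  define b where "b k = q ^ (k^2 + a*k) / (qpoch q k * qpoch q (n+a+k))" for k
  define M where "M k = r ^ k * (K / c^3)" for k
  have Alim: "(\<lambda>L. A k L) \<longlonglongrightarrow> b k" for k
  proof -
    have "(\<lambda>L. A k L) \<longlonglongrightarrow> q ^ (k^2 + a*k) * (1 / qpoch q k) / qpoch q (n+a+k)"
      unfolding A_def by (intro tendsto_intros qb_lim) (simp add: qpoch_nz)
    then show ?thesis by (simp add: b_def)
  qed
  have M0: "0 \<le> M k" for k using K c by (simp add: M_def r_def)
  have bound: "norm (A k L) \<le> M k" for k L
  proof (cases "k \<le> L")
    case False then show ?thesis using M0[of k] by (simp add: A_def qb_def)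
  next
    case True
    have "norm (A k L) = r ^ (k^2 + a*k) * (norm (qpoch q L) / (norm (qpoch q k) * norm (qpoch q (L-k)) * norm (qpoch q (n+a+k))))"
      using True by (simp add: A_def qb_def norm_mult norm_divide norm_power r_def)
    also have "\<dots> \<le> r ^ k * (K / c^3)"
    proof (rule mult_mono)
      have "k \<le> k^2 + a*k" using le_square[of k] by (simp add: power2_eq_square trans_le_add1)
      then show "r ^ (k^2 + a*k) \<le> r ^ k" using q1 by (intro power_decreasing) (auto simp: r_def)
      have "c^3 \<le> norm (qpoch q k) * norm (qpoch q (L-k)) * norm (qpoch q (n+a+k))"
        unfolding power3_eq_cube using c
        by (intro mult_mono) (auto intro: order_trans[OF less_imp_le[OF c(1)]])
      then show "norm (qpoch q L) / (norm (qpoch q k) * norm (qpoch q (L-k)) * norm (qpoch q (n+a+k))) \<le> K / c^3"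
        using K c by (intro frac_le) auto
      show "0 \<le> r ^ k" by (simp add: r_def)
      show "0 \<le> norm (qpoch q L) / (norm (qpoch q k) * norm (qpoch q (L-k)) * norm (qpoch q (n+a+k)))" by simp
    qed
    finally show ?thesis by (simp add: M_def)
  qed
  have sM: "summable M"
    unfolding M_def using q1 by (intro summable_mult2 summable_geometric) (simp add: r_def)
  have "((\<lambda>L. suminf (\<lambda>k. A k L)) \<longlongrightarrow> suminf b) sequentially"
    using tannerys_theorem[of A b sequentially M] Alim bound sM by (auto intro: always_eventually)
  moreover have "suminf (\<lambda>k. A k L) = (\<Sum>k\<le>L. A k L)" for L
    by (rule suminf_finite) (auto simp: A_def qb_def)
  ultimately have L1: "(\<lambda>L. \<Sum>k\<le>L. A k L) \<longlonglongrightarrow> suminf b" by simp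
  have L2: "(\<lambda>L. qpoch q (n+a+L) * (\<Sum>k\<le>L. A k L)) \<longlonglongrightarrow> qpoch_inf q * suminf b"
    by (intro tendsto_intros L1 qpoch_lim_shift)
  define T where "T L = (\<Sum>m\<le>L. qb q L m * q ^ (m^2 + a*m) * (if m \<le> n then qpoch q n / qpoch q (n - m) else 0))" for L
  have eqT: "qpoch q (n+a+L) * (\<Sum>k\<le>L. A k L) = T L" for L
    unfolding A_def T_def by (rule finite_id) (use q0 qpoch_nz in auto)
  have T2: "T L = (\<Sum>m\<le>n. qb q L m * (q ^ (m^2 + a*m) * qpoch q n / qpoch q (n - m)))" if "L \<ge> n" for L
  proof -
    have "T L = (\<Sum>m\<le>n. qb q L m * q ^ (m^2 + a*m) * (if m \<le> n then qpoch q n / qpoch q (n - m) else 0))"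
      unfolding T_def using that by (intro sum.mono_neutral_right) auto
    then show ?thesis by (simp add: mult.assoc)
  qed
  have "(\<lambda>L. \<Sum>m\<le>n. qb q L m * (q ^ (m^2 + a*m) * qpoch q n / qpoch q (n - m)))
        \<longlonglongrightarrow> (\<Sum>m\<le>n. 1 / qpoch q m * (q ^ (m^2 + a*m) * qpoch q n / qpoch q (n - m)))"
    by (intro tendsto_intros qb_lim)
  then have "T \<longlonglongrightarrow> (\<Sum>m\<le>n. 1 / qpoch q m * (q ^ (m^2 + a*m) * qpoch q n / qpoch q (n - m)))"
  proof (rule Lim_transform_eventually)
    show "\<forall>\<^sub>F L in sequentially. (\<Sum>m\<le>n. qb q L m * (q ^ (m^2 + a*m) * qpoch q n / qpoch q (n - m))) = T L"
      using eventually_ge_at_top[of n] by eventually_elim (simp add: T2)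
  qed
  moreover have "T \<longlonglongrightarrow> qpoch_inf q * suminf b" using L2 eqT by simp
  ultimately have "qpoch_inf q * suminf b = (\<Sum>m\<le>n. 1 / qpoch q m * (q ^ (m^2 + a*m) * qpoch q n / qpoch q (n - m)))"
    using LIMSEQ_unique by blast
  then show ?thesis unfolding b_def by simp
qed

end



lemma final_eq:
  fixes q :: complex and n a :: nat
  assumes q0: "0 < norm q" and q1: "norm q < 1"
  shows "(1 / qpoch_inf q) * (\<Sum>k\<le>n. q ^ (k^2 + a*k) / (qpoch q k * qpoch q (n - k)))
       = (1 / qpoch q n) * (\<Sum>k. q ^ (k^2 + a*k) / (qpoch q k * qpoch q (n+a+k)))"
proof -
  have P: "qpoch_inf q \<noteq> 0" using qpoch_inf_nz[OF q0 q1] .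
  have N: "qpoch q n \<noteq> 0" using qpoch_nz[OF q0 q1] .
  have "qpoch_inf q * (\<Sum>k. q ^ (k^2 + a*k) / (qpoch q k * qpoch q (n+a+k)))
       = (\<Sum>m\<le>n. q ^ (m^2 + a*m) * qpoch q n / (qpoch q m * qpoch q (n - m)))"
    by (rule main_lim[OF q0 q1])
  also have "\<dots> = qpoch q n * (\<Sum>k\<le>n. q ^ (k^2 + a*k) / (qpoch q k * qpoch q (n - k)))"
    by (auto simp: sum_distrib_left intro!: sum.cong)
  finally show ?thesis using P N by (simp add: field_simps)
qed

theorem mainTheorem15:
  fixes q :: complex and n :: nat
  assumes "0 < norm q" and "norm q < 1"
  shows "(1 / qpoch_inf q) * (\<Sum>k. q ^ (k^2) * inv_qpoch q (int k) * inv_qpoch q (int n - int k))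
           = (1 / qpoch q n) * (\<Sum>k. q ^ (k^2) * inv_qpoch q (int k) * inv_qpoch q (int n + int k))
       \<and> (1 / qpoch_inf q) * (\<Sum>k. q ^ (k^2 + k) * inv_qpoch q (int k) * inv_qpoch q (int n - int k))
           = (1 / qpoch q n) * (\<Sum>k. q ^ (k^2 + k) * inv_qpoch q (int k) * inv_qpoch q (int n + int k + 1))"
proof -
  have sumL: "(\<Sum>k. q ^ (k^2 + a*k) * inv_qpoch q (int k) * inv_qpoch q (int n - int k))
      = (\<Sum>k\<le>n. q ^ (k^2 + a*k) / (qpoch q k * qpoch q (n - k)))" for a
  proof -
    have "nat (int n - int x) = n - x" if "x \<le> n" for x using that by simp
    then show ?thesis
      by (subst suminf_finite[of "{..n}"]) (auto simp: inv_qpoch_def intro!: sum.cong)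
  qed
  have sumR: "(\<lambda>k. q ^ (k^2 + a*k) * inv_qpoch q (int k) * inv_qpoch q (int n + int k + int a))
      = (\<lambda>k. q ^ (k^2 + a*k) / (qpoch q k * qpoch q (n+a+k)))" for a
  proof
    fix k
    have "nat (int n + int k + int a) = n + a + k" by simp
    then show "q ^ (k^2 + a*k) * inv_qpoch q (int k) * inv_qpoch q (int n + int k + int a)
      = q ^ (k^2 + a*k) / (qpoch q k * qpoch q (n+a+k))"
      by (simp add: inv_qpoch_def)
  qed
  note E0 = final_eq[OF assms, where n=n and a=0]
  note E1 = final_eq[OF assms, where n=n and a=1]
  have A1: "(\<Sum>k. q ^ (k^2) * inv_qpoch q (int k) * inv_qpoch q (int n - int k))
     = (\<Sum>k\<le>n. q ^ (k^2 + 0*k) / (qpoch q k * qpoch q (n - k)))" using sumL[of 0] by simp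
  have B1: "(\<Sum>k. q ^ (k^2) * inv_qpoch q (int k) * inv_qpoch q (int n + int k))
     = (\<Sum>k. q ^ (k^2 + 0*k) / (qpoch q k * qpoch q (n+0+k)))" using sumR[of 0] by simp
  have A2: "(\<Sum>k. q ^ (k^2 + k) * inv_qpoch q (int k) * inv_qpoch q (int n - int k))
     = (\<Sum>k\<le>n. q ^ (k^2 + 1*k) / (qpoch q k * qpoch q (n - k)))" using sumL[of 1] by simp
  have B2: "(\<Sum>k. q ^ (k^2 + k) * inv_qpoch q (int k) * inv_qpoch q (int n + int k + 1))
     = (\<Sum>k. q ^ (k^2 + 1*k) / (qpoch q k * qpoch q (n+1+k)))" using sumR[of 1] by simp
  show ?thesis by (simp only: A1 B1 A2 B2 E0 E1)
qed


end
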